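(* Let $r\in\mathbb{Q}_{>0}\setminus\mathbb{N}$ with $\mathsf{n}(r)>1$, and let $S_r=\langle r^n:n\in\mathbb{N}\rangle$. Then $\Delta(S_r)=\{|\mathsf{n}(r)-\mathsf{d}(r)|\}$.
   Context: $\mathbb{N}=\{0,1,2,\dots\}$. For $r\in\mathbb{Q}_{>0}$ write $r=\mathsf{n}(r)/\mathsf{d}(r)$ in lowest terms; $S_r$ is the additive submonoid of $\mathbb{Q}_{\ge0}$ generated by all nonnegative powers of $r$ (atomic under the stated hypotheses). For an atomic monoid $M$ and $x\in M$ with set of lengths $\mathsf{L}(x)$, a positive integer $d$ is a distance of $x$ if $\mathsf{L}(x)\cap\{l,\dots,l+d\}=\{l,l+d\}$ for some $l\in\mathsf{L}(x)$; $\Delta(M)$ is the union over $x\in M$ of the sets of distances of $x$. *)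

theory Defs
  imports Complex_Main
begin

definition num_of :: "rat \<Rightarrow> int" where "num_of r = fst (quotient_of r)"
definition den_of :: "rat \<Rightarrow> int" where "den_of r = snd (quotient_of r)"

definition S :: "rat \<Rightarrow> rat set" where
  "S r = {x. \<exists>(N::nat) (c::nat \<Rightarrow> nat). x = (\<Sum>i<N. of_nat (c i) * r ^ i)}"

definition units_of_mon :: "rat set \<Rightarrow> rat set" where
  "units_of_mon M = {u \<in> M. \<exists>v\<in>M. u + v = 0}"

definition atoms :: "rat set \<Rightarrow> rat set" where
  "atoms M = {a \<in> M. a \<notin> units_of_mon M \<and>
     (\<forall>u\<in>M. \<forall>v\<in>M. a = u + v \<longrightarrow> u \<in> units_of_mon M \<or> v \<in> units_of_mon M)}"

definition lengths :: "rat set \<Rightarrow> rat \<Rightarrow> nat set" where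
  "lengths M x = {length as | as. set as \<subseteq> atoms M \<and> sum_list as = x}"

definition distances :: "rat set \<Rightarrow> rat \<Rightarrow> nat set" where
  "distances M x = {d. d > 0 \<and> (\<exists>l \<in> lengths M x.
      lengths M x \<inter> {l..l+d} = {l, l+d})}"

definition Delta :: "rat set \<Rightarrow> nat set" where
  "Delta M = (\<Union>x\<in>M. distances M x)"

end

theory Submission
  imports Defs
begin

locale geo =
  fixes A B :: nat and r :: rat
  assumes A2: "2 \<le> A" and B2: "2 \<le> B" and cop: "coprime A B"
    and rdef: "r = of_nat A / of_nat B"
begin

definition val :: "nat \<Rightarrow> (nat \<Rightarrow> nat) \<Rightarrow> rat" where
  "val N c = (\<Sum>i<N. of_nat (c i) * r ^ i)"
definition len :: "nat \<Rightarrow> (nat \<Rightarrow> nat) \<Rightarrow> nat" where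
  "len N c = (\<Sum>i<N. c i)"

lemma r_pos: "r > 0" using A2 B2 by (simp add: rdef)
lemma Br: "of_nat B * r = of_nat A" using B2 by (simp add: rdef)
lemma AneB: "A \<noteq> B"
proof
  assume "A = B" then have "coprime A A" using cop by simp
  then have "A = 1" by simp
  then show False using A2 by simp
qed
lemma r_ne1: "r \<noteq> 1" using AneB B2 by (simp add: rdef)

lemma val_add: "val N (\<lambda>i. c i + e i) = val N c + val N e"
  by (simp add: val_def sum.distrib algebra_simps)
lemma len_add: "len N (\<lambda>i. c i + e i) = len N c + len N e"
  by (simp add: len_def sum.distrib)
lemma val_delta: "val N (\<lambda>i. if i = j then m else 0) = (if j < N then of_nat m * r^j else 0)"
proof -
  have "val N (\<lambda>i. if i = j then m else 0) = (\<Sum>i<N. if i = j then of_nat m * r^j else 0)"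
    unfolding val_def by (rule sum.cong) auto
  then show ?thesis by simp
qed
lemma len_delta: "len N (\<lambda>i. if i = j then m else 0) = (if j < N then m else 0)"
  unfolding len_def by simp
lemma val_nonneg: "val N c \<ge> 0"
  unfolding val_def using r_pos by (intro sum_nonneg) simp
lemma val_pos: assumes "len N c > 0" shows "val N c > 0"
proof -
  from assms obtain i where i: "i < N" "c i > 0" unfolding len_def
    by (metis lessThan_iff not_gr_zero sum_eq_0_iff finite_lessThan less_irrefl)
  show ?thesis unfolding val_def
    by (rule sum_pos2[of _ i]) (use i r_pos in auto)
qed
lemma val_ext: assumes "\<forall>i\<ge>N. c i = 0" "N \<le> M" shows "val M c = val N c" "len M c = len N c"
proof -
  show "val M c = val N c" unfolding val_def
    by (rule sum.mono_neutral_right) (use assms in auto)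
  show "len M c = len N c" unfolding len_def
    by (rule sum.mono_neutral_right) (use assms in auto)
qed
lemma val_restr: "val N (\<lambda>i. if i < N then c i else 0) = val N c"
  "len N (\<lambda>i. if i < N then c i else 0) = len N c"
  unfolding val_def len_def by (auto intro: sum.cong)

lemma int_ident:
  fixes e :: "nat \<Rightarrow> int"
  assumes "(\<Sum>k<N. of_int (e k) * r^k) = 0"
  shows "(\<Sum>k<N. e k * int A^k * int B^(N-k)) = 0"
proof -
  have "of_int (\<Sum>k<N. e k * int A^k * int B^(N-k)) = (of_nat B^N :: rat) * (\<Sum>k<N. of_int (e k) * r^k)"
    unfolding of_int_sum sum_distrib_left
  proof (rule sum.cong)
    fix k assume "k \<in> {..<N}"
    then have "B^N = B^k * B^(N-k)" by (simp add: power_add[symmetric])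
    then have "(of_nat B^N :: rat) = of_nat B^k * of_nat B^(N-k)" by (metis of_nat_mult of_nat_power)
    then show "of_int (e k * int A^k * int B^(N-k)) = (of_nat B^N :: rat) * (of_int (e k) * r^k)"
      using B2 by (simp add: rdef power_divide field_simps)
  qed simp
  then show ?thesis using assms by (metis mult_zero_right of_int_eq_0_iff)
qed

lemma dvdA:
  fixes e :: "nat \<Rightarrow> int"
  assumes z: "\<forall>k<j. e k = 0" and jN: "j < N" and s: "(\<Sum>k<N. of_int (e k) * r^k) = 0"
  shows "int A dvd e j"
proof -
  let ?t = "\<lambda>k. e k * int A^k * int B^(N-k)"
  have Z: "(\<Sum>k<N. ?t k) = 0" by (rule int_ident[OF s])
  have "(\<Sum>k<N. ?t k) = ?t j + (\<Sum>k\<in>{..<N}-{j}. ?t k)"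
    by (rule sum.remove) (use jN in auto)
  with Z have eq: "?t j = - (\<Sum>k\<in>{..<N}-{j}. ?t k)" by linarith
  have "int A^(Suc j) dvd (\<Sum>k\<in>{..<N}-{j}. ?t k)"
  proof (rule dvd_sum)
    fix k assume k: "k \<in> {..<N}-{j}"
    show "int A^(Suc j) dvd ?t k"
    proof (cases "k < j")
      case True then show ?thesis using z by simp
    next
      case False
      with k have "Suc j \<le> k" by auto
      then have "int A^(Suc j) dvd int A^k" by (rule le_imp_power_dvd)
      then show ?thesis by (simp add: dvd_mult2 mult.commute mult.left_commute)
    qed
  qed
  then have "int A^(Suc j) dvd ?t j" using eq by simp
  then have "int A^j * int A dvd int A^j * (e j * int B^(N-j))"
    by (simp add: ac_simps)
  then have "int A dvd e j * int B^(N-j)" using A2 by simp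
  moreover have "coprime (int A) (int B^(N-j))" using cop by simp
  ultimately show ?thesis by (simp add: coprime_dvd_mult_left_iff)
qed

lemma dvdB:
  fixes e :: "nat \<Rightarrow> int"
  assumes z: "\<forall>k. j < k \<and> k < N \<longrightarrow> e k = 0" and jN: "j < N" and s: "(\<Sum>k<N. of_int (e k) * r^k) = 0"
  shows "int B dvd e j"
proof -
  let ?t = "\<lambda>k. e k * int A^k * int B^(N-k)"
  have Z: "(\<Sum>k<N. ?t k) = 0" by (rule int_ident[OF s])
  have "(\<Sum>k<N. ?t k) = ?t j + (\<Sum>k\<in>{..<N}-{j}. ?t k)"
    by (rule sum.remove) (use jN in auto)
  with Z have eq: "?t j = - (\<Sum>k\<in>{..<N}-{j}. ?t k)" by linarith
  have "int B^(Suc (N-j)) dvd (\<Sum>k\<in>{..<N}-{j}. ?t k)"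
  proof (rule dvd_sum)
    fix k assume k: "k \<in> {..<N}-{j}"
    show "int B^(Suc (N-j)) dvd ?t k"
    proof (cases "j < k")
      case True then show ?thesis using z k by simp
    next
      case False
      with k jN have "Suc (N-j) \<le> N - k" by auto
      then have "int B^(Suc (N-j)) dvd int B^(N-k)" by (rule le_imp_power_dvd)
      then show ?thesis by (simp add: dvd_mult)
    qed
  qed
  then have "int B^(Suc (N-j)) dvd ?t j" using eq by simp
  then have "int B^(N-j) * int B dvd int B^(N-j) * (e j * int A^j)"
    by (simp add: ac_simps)
  then have "int B dvd e j * int A^j" using B2 by simp
  moreover have "coprime (int B) (int A^j)" using cop by (simp add: coprime_commute)
  ultimately show ?thesis by (simp add: coprime_dvd_mult_left_iff)
qed

lemma val_gt: assumes "d k > 0" "k < N" "len N d \<ge> 2" shows "val N d > r^k"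
proof -
  define d' where "d' = d(k := d k - 1)"
  have dd: "d = (\<lambda>i. d' i + (if i = k then 1 else 0))"
    using assms(1) by (auto simp: d'_def)
  have v: "val N d = val N d' + r^k" and l: "len N d = len N d' + 1"
    by (subst dd, simp only: val_add len_add val_delta len_delta, use assms(2) in simp)+
  then have "len N d' > 0" using assms(3) by simp
  then have "val N d' > 0" by (rule val_pos)
  with v show ?thesis by simp
qed

lemma atom_core0: assumes "i < N" "val N d = r^i" "len N d \<ge> 2" shows False
proof -
  define e where "e k = (if k = i then 1 else 0) - int (d k)" for k
  have "(\<Sum>k<N. of_int (e k) * r^k) = (\<Sum>k<N. (if k = i then r^i else 0) - of_nat (d k) * r^k)"
    by (rule sum.cong) (auto simp: e_def algebra_simps)
  also have "\<dots> = r^i - val N d" using assms(1) by (simp add: sum_subtractf val_def)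
  finally have s: "(\<Sum>k<N. of_int (e k) * r^k) = 0" using assms(2) by simp
  show False
  proof (cases "A < B")
    case True
    then have r1: "r \<le> 1" using B2 by (simp add: rdef)
    show False
    proof (cases "\<exists>k\<le>i. k < N \<and> d k > 0")
      case True
      then obtain k where k: "k \<le> i" "k < N" "d k > 0" by auto
      have "val N d > r^k" by (rule val_gt) (use k assms in auto)
      moreover have "r^i \<le> r^k" using power_decreasing[OF k(1), of r] r1 r_pos by simp
      ultimately show False using assms by simp
    next
      case False
      then have "int A dvd e i" by (intro dvdA[OF _ assms(1) s]) (use assms(1) in \<open>auto simp: e_def\<close>)
      then have "int A dvd 1" using False assms(1) by (simp add: e_def)
      then show False using A2 by simp
    qed
  next
    case False
    then have r1: "r \<ge> 1" using B2 by (simp add: rdef)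
    show False
    proof (cases "\<exists>k\<ge>i. k < N \<and> d k > 0")
      case True
      then obtain k where k: "k \<ge> i" "k < N" "d k > 0" by auto
      have "val N d > r^k" by (rule val_gt) (use k assms in auto)
      moreover have "r^i \<le> r^k" using power_increasing[OF k(1), of r] r1 by simp
      ultimately show False using assms by simp
    next
      case False
      then have "int B dvd e i" by (intro dvdB[OF _ assms(1) s]) (use assms(1) in \<open>auto simp: e_def\<close>)
      then have "int B dvd 1" using False assms(1) by (simp add: e_def)
      then show False using B2 by simp
    qed
  qed
qed

lemma atom_core: assumes "val N d = r^i" "len N d \<ge> 2" shows False
proof -
  define M where "M = max N (Suc i)"
  define d0 where "d0 = (\<lambda>k. if k < N then d k else 0)"
  have "val M d0 = val N d0" "len M d0 = len N d0"
    by (rule val_ext, auto simp: d0_def M_def)+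
  then have "val M d0 = r^i" "len M d0 \<ge> 2" using assms val_restr[of N d] by (simp_all add: d0_def)
  then show False by (intro atom_core0[of i M d0]) (auto simp: M_def)
qed

definition Q :: "nat \<Rightarrow> (nat \<Rightarrow> nat) \<Rightarrow> (nat \<Rightarrow> nat) \<Rightarrow> rat" where
  "Q N c d = (\<Sum>i<N. \<bar>val (Suc i) c - val (Suc i) d\<bar> / r^i)"

definition kk :: int where "kk = int B - int A"

definition LL :: "rat \<Rightarrow> nat set" where "LL x = {len N c | N c. val N c = x}"

definition Pr :: "nat \<Rightarrow> (nat \<Rightarrow> nat) \<Rightarrow> (nat \<Rightarrow> nat) \<Rightarrow> bool" where
  "Pr N c d \<longleftrightarrow> kk dvd (int (len N c) - int (len N d)) \<and>
     (\<forall>l::nat. min (int (len N c)) (int (len N d)) \<le> int l \<and> int l \<le> max (int (len N c)) (int (len N d))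
        \<and> kk dvd (int l - int (len N c)) \<longrightarrow> l \<in> LL (val N c))"

lemma kk_ne0: "kk \<noteq> 0" using AneB by (simp add: kk_def)

lemma Q_nonneg: "Q N c d \<ge> 0" unfolding Q_def using r_pos by (intro sum_nonneg) simp
lemma Q_sym: "Q N c d = Q N d c" unfolding Q_def by (simp add: abs_minus_commute)

lemma val_Suc: "val (Suc j) c = val j c + of_nat (c j) * r^j" by (simp add: val_def)

lemma step:
  assumes vN: "val N c = val N d" and agree: "\<forall>i<j. c i = d i" and jN: "j < N" and gt: "d j < c j"
  obtains c' where "val N c' = val N c" "int (len N c') = int (len N c) + kk"
    "Q N c' d = Q N c d - of_nat A"
proof -
  have vj: "val j c = val j d" unfolding val_def by (rule sum.cong) (use agree in auto)
  have X: "val (Suc j) c - val (Suc j) d = (of_nat (c j) - of_nat (d j)) * r^j"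
    using vj by (simp add: val_Suc algebra_simps)
  have rj: "r^j > 0" using r_pos by simp
  have SjN: "Suc j < N"
  proof (rule ccontr)
    assume "\<not> Suc j < N" then have "N = Suc j" using jN by simp
    then have "(of_nat (c j) - of_nat (d j)) * r^j = 0" using X vN by simp
    then show False using gt rj r_pos by simp
  qed
  define e where "e i = int (c i) - int (d i)" for i
  have "(\<Sum>i<N. of_int (e i) * r^i) = val N c - val N d"
    by (simp add: e_def val_def sum_subtractf algebra_simps)
  then have "int A dvd e j" using vN by (intro dvdA[OF _ jN]) (use agree jN in \<open>auto simp: e_def\<close>)
  moreover have "e j > 0" using gt by (simp add: e_def)
  ultimately have "int A \<le> e j" by (simp add: zdvd_imp_le)
  then have cjA: "c j \<ge> d j + A" by (simp add: e_def)
  define c0 where "c0 = c(j := c j - A)"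
  have cdec: "c = (\<lambda>i. c0 i + (if i = j then A else 0))" using cjA by (auto simp: c0_def)
  define c' where "c' = (\<lambda>i. c0 i + (if i = Suc j then B else 0))"
  have BA: "of_nat B * r^(Suc j) = of_nat A * r^j" using Br by (simp add: mult.assoc[symmetric])
  have vc: "val M c = val M c0 + (if j < M then of_nat A * r^j else 0)" for M
    by (subst cdec) (simp only: val_add val_delta)
  have vc': "val M c' = val M c0 + (if Suc j < M then of_nat A * r^j else 0)" for M
    unfolding c'_def by (simp only: val_add val_delta BA)
  have lc: "len M c = len M c0 + (if j < M then A else 0)" for M
    by (subst cdec) (simp only: len_add len_delta)
  have lc': "len M c' = len M c0 + (if Suc j < M then B else 0)" for M
    unfolding c'_def by (simp only: len_add len_delta)
  have 1: "val N c' = val N c" using vc vc' SjN by simp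
  have 2: "int (len N c') = int (len N c) + kk" using lc lc' SjN by (simp add: kk_def)
  have trm: "\<bar>val (Suc i) c' - val (Suc i) d\<bar> / r^i =
      \<bar>val (Suc i) c - val (Suc i) d\<bar> / r^i - (if i = j then of_nat A else 0)" for i
  proof (cases "i = j")
    case True
    have "val (Suc i) c' - val (Suc i) d = (of_nat (c j) - of_nat (d j) - of_nat A) * r^j"
      using X True vc[of "Suc j"] vc'[of "Suc j"] by (simp add: algebra_simps)
    moreover have "(of_nat (c j) - of_nat (d j) - of_nat A :: rat) \<ge> 0" using cjA by simp
    moreover have "(of_nat (c j) - of_nat (d j) :: rat) \<ge> 0" using cjA by simp
    ultimately show ?thesis using True X rj r_pos by (simp add: abs_mult)
  next
    case False
    then have "val (Suc i) c' = val (Suc i) c" using vc vc' by auto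
    then show ?thesis using False by simp
  qed
  have 3: "Q N c' d = Q N c d - of_nat A"
    unfolding Q_def by (simp only: trm sum_subtractf) (use jN in simp)
  show ?thesis using 1 2 3 that by blast
qed

lemma btw:
  fixes k x y l :: int
  assumes "k \<noteq> 0" "k dvd (l - x)" "l \<noteq> x" "min x y \<le> l" "l \<le> max x y"
  shows "min (x+k) y \<le> l \<and> l \<le> max (x+k) y"
proof -
  have "\<bar>k\<bar> \<le> \<bar>l - x\<bar>" using assms(2,3) by (intro dvd_imp_le_int) auto
  then show ?thesis using assms(4,5) by (auto simp: abs_if min_def max_def split: if_splits)
qed

lemma Pr_sym: assumes "val N c = val N d" "Pr N c d" shows "Pr N d c"
proof -
  have d1: "kk dvd (int (len N c) - int (len N d))" using assms(2) by (simp add: Pr_def)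
  then have "kk dvd (int (len N d) - int (len N c))"
    by (metis dvd_minus_iff minus_diff_eq)
  moreover have "l \<in> LL (val N d)" if "min (int (len N d)) (int (len N c)) \<le> int l"
    "int l \<le> max (int (len N d)) (int (len N c))" "kk dvd (int l - int (len N d))" for l
  proof -
    have "kk dvd (int l - int (len N d)) + (int (len N d) - int (len N c))"
      using that(3) d1 by (metis dvd_add dvd_minus_iff minus_diff_eq)
    then have "kk dvd (int l - int (len N c))" by simp
    then show ?thesis using that assms by (auto simp: Pr_def min.commute max.commute)
  qed
  ultimately show ?thesis by (simp add: Pr_def)
qed

lemma Pr_back: assumes "val N c' = val N c" "int (len N c') = int (len N c) + kk" "Pr N c' d"
  shows "Pr N c d"
proof -
  have d1: "kk dvd (int (len N c') - int (len N d))" using assms(3) by (simp add: Pr_def)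
  then have "kk dvd (int (len N c') - int (len N d)) - kk" by simp
  then have "kk dvd (int (len N c) - int (len N d))" using assms(2) by (simp add: algebra_simps)
  moreover have "l \<in> LL (val N c)" if h: "min (int (len N c)) (int (len N d)) \<le> int l"
    "int l \<le> max (int (len N c)) (int (len N d))" "kk dvd (int l - int (len N c))" for l
  proof (cases "l = len N c")
    case True then show ?thesis by (auto simp: LL_def)
  next
    case False
    then have "int l \<noteq> int (len N c)" by simp
    from btw[OF kk_ne0 h(3) this h(1,2)]
    have b: "min (int (len N c')) (int (len N d)) \<le> int l \<and> int l \<le> max (int (len N c')) (int (len N d))"
      using assms(2) by simp
    have "kk dvd (int l - int (len N c)) - kk" using h(3) by simp
    then have "kk dvd (int l - int (len N c'))" using assms(2) by (simp add: algebra_simps)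
    then have "l \<in> LL (val N c')" using b assms(3) by (simp add: Pr_def)
    then show ?thesis using assms(1) by simp
  qed
  ultimately show ?thesis by (simp add: Pr_def)
qed

lemma key_n: "Q N c d \<le> of_nat n \<Longrightarrow> val N c = val N d \<Longrightarrow> Pr N c d"
proof (induction n arbitrary: c d rule: less_induct)
  case (less n)
  show ?case
  proof (cases "\<forall>i<N. c i = d i")
    case True
    then have "len N c = len N d" unfolding len_def by (intro sum.cong) auto
    then show ?thesis unfolding Pr_def LL_def by auto (metis order_antisym)
  next
    case False
    then obtain j where j: "j < N" "c j \<noteq> d j" "\<forall>i<j. \<not> (i < N \<and> c i \<noteq> d i)"
      using exists_least_iff[of "\<lambda>j. j < N \<and> c j \<noteq> d j"] by auto
    have ag: "\<forall>i<j. c i = d i" using j by auto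
    have nn: "n - 1 < n \<and> Q N c d - of_nat A \<le> of_nat (n - 1)" if "Q N c d - of_nat A \<ge> 0"
    proof -
      have "of_nat A \<le> (of_nat n :: rat)" using that less.prems(1) by linarith
      then have "A \<le> n" by simp
      then have "n \<ge> 1" using A2 by simp
      then have "(of_nat (n - 1) :: rat) = of_nat n - 1" by (simp add: of_nat_diff)
      then show ?thesis using less.prems(1) A2 \<open>n \<ge> 1\<close> by simp
    qed
    show ?thesis
    proof (cases "d j < c j")
      case True
      obtain c' where c': "val N c' = val N c" "int (len N c') = int (len N c) + kk"
        "Q N c' d = Q N c d - of_nat A" by (rule step[OF less.prems(2) ag j(1) True])
      have "Q N c d - of_nat A \<ge> 0" using Q_nonneg[of N c' d] c'(3) by simp
      with nn have "Pr N c' d" using c' less.prems(2) by (intro less.IH[of "n - 1"]) auto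
      then show ?thesis by (rule Pr_back[OF c'(1,2)])
    next
      case False
      then have lt: "c j < d j" using j(2) by simp
      obtain d' where d': "val N d' = val N d" "int (len N d') = int (len N d) + kk"
        "Q N d' c = Q N d c - of_nat A"
        by (rule step[OF less.prems(2)[symmetric] _ j(1) lt]) (use ag in auto)
      have "Q N c d - of_nat A \<ge> 0" using Q_nonneg[of N d' c] d'(3) Q_sym[of N d c] by simp
      with nn have "Pr N d' c" using d' less.prems(2) Q_sym[of N d c]
        by (intro less.IH[of "n - 1"]) auto
      then have "Pr N d c" by (rule Pr_back[OF d'(1,2)])
      then show ?thesis using Pr_sym less.prems(2) by metis
    qed
  qed
qed

lemma key: "val N c = val N d \<Longrightarrow> Pr N c d"
proof -
  assume v: "val N c = val N d"
  have "Q N c d \<le> of_int \<lceil>Q N c d\<rceil>" by (rule le_of_int_ceiling)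
  also have "\<dots> = of_nat (nat \<lceil>Q N c d\<rceil>)" using Q_nonneg[of N c d] by simp
  finally show ?thesis using key_n v by blast
qed


end

context geo begin
lemma LL_cor:
  assumes "l1 \<in> LL x" "l2 \<in> LL x"
  shows "kk dvd (int l2 - int l1)"
    "\<And>l. min (int l1) (int l2) \<le> int l \<Longrightarrow> int l \<le> max (int l1) (int l2) \<Longrightarrow>
        kk dvd (int l - int l1) \<Longrightarrow> l \<in> LL x"
proof -
  obtain N1 c1 where 1: "l1 = len N1 c1" "val N1 c1 = x" using assms(1) by (auto simp: LL_def)
  obtain N2 c2 where 2: "l2 = len N2 c2" "val N2 c2 = x" using assms(2) by (auto simp: LL_def)
  define N where "N = N1 + N2"
  define d1 where "d1 = (\<lambda>i. if i < N1 then c1 i else 0)"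
  define d2 where "d2 = (\<lambda>i. if i < N2 then c2 i else 0)"
  have e1: "val N d1 = x" "len N d1 = l1"
    using val_ext[of N1 d1 N] val_restr[of N1 c1] 1 by (auto simp: d1_def N_def)
  have e2: "val N d2 = x" "len N d2 = l2"
    using val_ext[of N2 d2 N] val_restr[of N2 c2] 2 by (auto simp: d2_def N_def)
  have P: "Pr N d1 d2" by (rule key) (simp add: e1 e2)
  then have "kk dvd (int l1 - int l2)" by (simp add: Pr_def e1 e2)
  then show "kk dvd (int l2 - int l1)" by (metis dvd_minus_iff minus_diff_eq)
  show "l \<in> LL x" if "min (int l1) (int l2) \<le> int l" "int l \<le> max (int l1) (int l2)"
        "kk dvd (int l - int l1)" for l
    using P that by (simp add: Pr_def e1 e2)
qed


lemma S_eq: "S r = {val N c | N c. True}"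
  unfolding S_def val_def by auto


lemma len0: "len N c = 0 \<Longrightarrow> val N c = 0"
  unfolding len_def val_def by simp

lemma S_nonneg: "x \<in> S r \<Longrightarrow> x \<ge> 0"
  unfolding S_eq using val_nonneg by blast

lemma zero_S: "0 \<in> S r"
proof -
  show ?thesis unfolding S_eq mem_Collect_eq
    by (rule exI[of _ 0], rule exI[of _ "\<lambda>_. 0"]) (simp add: val_def)
qed

lemma units_eq: "units_of_mon (S r) = {0}"
proof (rule equalityI)
  show "units_of_mon (S r) \<subseteq> {0}"
  proof
    fix u assume "u \<in> units_of_mon (S r)"
    then obtain v where "u \<in> S r" "v \<in> S r" "u + v = 0" unfolding units_of_mon_def by blast
    then show "u \<in> {0}" using S_nonneg[of u] S_nonneg[of v] by simp
  qed
  show "{0} \<subseteq> units_of_mon (S r)" using zero_S unfolding units_of_mon_def by simp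
qed

lemma pow_in_S: "r^i \<in> S r"
proof -
  have "val (Suc i) (\<lambda>k. if k = i then 1 else 0) = r^i" by (simp only: val_delta) simp
  then show ?thesis unfolding S_eq mem_Collect_eq by metis
qed

lemma val_in_S: "val N c \<in> S r" unfolding S_eq mem_Collect_eq by metis
lemma atoms_eq: "atoms (S r) = range (\<lambda>i. r^i)"
proof
  show "atoms (S r) \<subseteq> range (\<lambda>i. r^i)"
  proof
    fix a assume a: "a \<in> atoms (S r)"
    then have aS: "a \<in> S r" and a0: "a \<noteq> 0"
      and irr: "\<forall>u\<in>S r. \<forall>v\<in>S r. a = u + v \<longrightarrow> u = 0 \<or> v = 0"
      by (auto simp: atoms_def units_eq)
    obtain N c where ac: "a = val N c" using aS unfolding S_eq by blast
    have "len N c \<noteq> 0" using a0 ac len0 by auto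
    then obtain i where i: "i < N" "c i > 0" unfolding len_def
      by (metis lessThan_iff not_gr_zero sum_eq_0_iff finite_lessThan)
    define c' where "c' = c(i := c i - 1)"
    have cd: "c = (\<lambda>k. c' k + (if k = i then 1 else 0))" using i(2) by (auto simp: c'_def)
    have "a = val N c' + r^i" using ac i(1) by (subst (asm) cd) (simp only: val_add val_delta, simp)
    moreover have "val N c' \<in> S r" by (rule val_in_S)
    ultimately have "val N c' = 0 \<or> r^i = 0" using irr pow_in_S by (metis add.commute)
    then show "a \<in> range (\<lambda>i. r^i)" using \<open>a = val N c' + r^i\<close> r_pos by auto
  qed
next
  show "range (\<lambda>i. r^i) \<subseteq> atoms (S r)"
  proof clarify
    fix i
    have "u = 0 \<or> v = 0" if uS: "u \<in> S r" and vS: "v \<in> S r" and uv: "r^i = u + v" for u v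
    proof (rule ccontr)
      assume nz: "\<not> (u = 0 \<or> v = 0)"
      obtain N1 c1 where 1: "u = val N1 c1" using uS unfolding S_eq by blast
      obtain N2 c2 where 2: "v = val N2 c2" using vS unfolding S_eq by blast
      define N where "N = N1 + N2"
      define d1 where "d1 = (\<lambda>i. if i < N1 then c1 i else 0)"
      define d2 where "d2 = (\<lambda>i. if i < N2 then c2 i else 0)"
      have e1: "val N d1 = u" "len N d1 = len N1 c1"
        using val_ext[of N1 d1 N] val_restr[of N1 c1] 1 by (auto simp: d1_def N_def)
      have e2: "val N d2 = v" "len N d2 = len N2 c2"
        using val_ext[of N2 d2 N] val_restr[of N2 c2] 2 by (auto simp: d2_def N_def)
      have "len N1 c1 \<noteq> 0" "len N2 c2 \<noteq> 0" using nz 1 2 len0 by auto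
      then have "len N (\<lambda>k. d1 k + d2 k) \<ge> 2" using e1 e2 by (simp add: len_add)
      moreover have "val N (\<lambda>k. d1 k + d2 k) = r^i" using e1 e2 uv by (simp only: val_add)
      ultimately show False using atom_core by blast
    qed
    then show "r^i \<in> atoms (S r)" unfolding atoms_def units_eq using pow_in_S r_pos by simp
  qed
qed


lemma list_to_fun: "set as \<subseteq> range (\<lambda>i. r^i) \<Longrightarrow>
   \<exists>N c. (\<forall>i\<ge>N. c i = 0) \<and> len N c = length as \<and> val N c = sum_list as"
proof (induction as)
  case Nil
  show ?case by (rule exI[of _ 0], rule exI[of _ "\<lambda>_. 0"]) (simp add: len_def val_def)
next
  case (Cons a as)
  then obtain N c where c: "\<forall>i\<ge>N. c i = 0" "len N c = length as" "val N c = sum_list as" by auto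
  obtain j where aj: "a = r^j" using Cons.prems by auto
  define M where "M = max N (Suc j)"
  define c' where "c' = (\<lambda>i. c i + (if i = j then 1 else 0))"
  have NM: "N \<le> M" "j < M" by (auto simp: M_def)
  have "\<forall>i\<ge>M. c' i = 0" using c(1) by (auto simp: M_def c'_def)
  moreover have "len M c' = len N c + 1" unfolding c'_def
    using val_ext(2)[OF c(1) NM(1)] NM(2) by (simp only: len_add len_delta) simp
  moreover have "val M c' = val N c + r^j" unfolding c'_def
    using val_ext(1)[OF c(1) NM(1)] NM(2) by (simp only: val_add val_delta) simp
  ultimately show ?case using c aj by (intro exI[of _ M] exI[of _ c']) (simp add: add.commute)
qed

lemma fun_to_list: "\<exists>as. set as \<subseteq> range (\<lambda>i. r^i) \<and> length as = len N c \<and> sum_list as = val N c"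
proof (induction N)
  case 0 then show ?case by (simp add: len_def val_def)
next
  case (Suc N)
  then obtain as where as: "set as \<subseteq> range (\<lambda>i. r^i)" "length as = len N c" "sum_list as = val N c" by auto
  show ?case
    by (rule exI[of _ "as @ replicate (c N) (r^N)"]) (use as in \<open>auto simp: len_def val_def sum_list_replicate\<close>)
qed

lemma lengths_eq: "lengths (S r) x = LL x"
proof
  show "lengths (S r) x \<subseteq> LL x"
  proof
    fix l assume "l \<in> lengths (S r) x"
    then obtain as where as: "l = length as" "set as \<subseteq> range (\<lambda>i. r^i)" "sum_list as = x"
      unfolding lengths_def atoms_eq by blast
    from list_to_fun[OF as(2)] obtain N c where "len N c = length as" "val N c = sum_list as" by blast
    then show "l \<in> LL x" unfolding LL_def mem_Collect_eq using as by metis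
  qed
  show "LL x \<subseteq> lengths (S r) x"
  proof
    fix l assume "l \<in> LL x"
    then obtain N c where Nc: "l = len N c" "val N c = x" unfolding LL_def by blast
    from fun_to_list obtain as where "set as \<subseteq> range (\<lambda>i. r^i)" "length as = len N c" "sum_list as = val N c" by blast
    then show "l \<in> lengths (S r) x" unfolding lengths_def atoms_eq mem_Collect_eq using Nc by metis
  qed
qed

lemma dvd_small: assumes "kk dvd z" "0 \<le> z" "z \<le> \<bar>kk\<bar>" shows "z = 0 \<or> z = \<bar>kk\<bar>"
proof (rule ccontr)
  assume "\<not> (z = 0 \<or> z = \<bar>kk\<bar>)"
  then have "z \<noteq> 0" "z < \<bar>kk\<bar>" using assms by auto
  moreover have "\<bar>kk\<bar> \<le> \<bar>z\<bar>" using assms(1) \<open>z \<noteq> 0\<close> by (rule dvd_imp_le_int[rotated])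
  ultimately show False using assms(2) by simp
qed

lemma Delta_eq: "Delta (S r) = {nat \<bar>kk\<bar>}"
proof -
  define K where "K = nat \<bar>kk\<bar>"
  have iK: "int K = \<bar>kk\<bar>" by (simp add: K_def)
  have K0: "K > 0" using kk_ne0 by (simp add: K_def)
  have kK: "kk dvd int K" using iK by simp
  have sub: "y = K" if "y \<in> distances (S r) x" for x y
  proof -
    from that obtain l where y0: "y > 0" and l: "l \<in> LL x" and I: "LL x \<inter> {l..l+y} = {l, l+y}"
      unfolding distances_def lengths_eq mem_Collect_eq by metis
    have "l + y \<in> LL x \<inter> {l..l+y}" by (subst I) simp
    then have ly: "l + y \<in> LL x" by simp
    have "kk dvd int (l+y) - int l" by (rule LL_cor(1)[OF l ly])
    then have "kk dvd int y" by simp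
    then have "\<bar>kk\<bar> \<le> \<bar>int y\<bar>" using y0 by (intro dvd_imp_le_int) auto
    then have Ky: "K \<le> y" using iK by simp
    have "l + K \<in> LL x"
      by (rule LL_cor(2)[OF l ly]) (use Ky kK in auto)
    then have "l + K \<in> LL x \<inter> {l..l+y}" using Ky by simp
    then have "l + K \<in> {l, l+y}" by (simp only: I)
    then show ?thesis using K0 by auto
  qed
  have xS: "of_nat A \<in> S r"
  proof -
    have "val 1 (\<lambda>_. A) = of_nat A" by (simp add: val_def)
    then show ?thesis using val_in_S by metis
  qed
  have AL: "A \<in> LL (of_nat A)"
  proof -
    have "val 1 (\<lambda>_. A) = of_nat A" "len 1 (\<lambda>_. A) = A" by (simp_all add: val_def len_def)
    then show ?thesis unfolding LL_def mem_Collect_eq by metis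
  qed
  have BL: "B \<in> LL (of_nat A)"
  proof -
    have "val 2 (\<lambda>i. if i = 1 then B else 0) = of_nat A" "len 2 (\<lambda>i. if i = 1 then B else 0) = B"
      by (simp_all only: val_delta len_delta) (simp_all add: Br)
    then show ?thesis unfolding LL_def mem_Collect_eq by metis
  qed
  define l where "l = min A B"
  have lL: "l \<in> LL (of_nat A)" using AL BL by (simp add: l_def min_def)
  have lK: "l + K = max A B" using iK by (simp add: l_def kk_def max_def min_def) linarith
  have lKL: "l + K \<in> LL (of_nat A)" using AL BL lK by (simp add: max_def)
  have "LL (of_nat A) \<inter> {l..l+K} = {l, l+K}"
  proof
    show "{l, l+K} \<subseteq> LL (of_nat A) \<inter> {l..l+K}" using lL lKL by auto
    show "LL (of_nat A) \<inter> {l..l+K} \<subseteq> {l, l+K}"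
    proof
      fix m assume m: "m \<in> LL (of_nat A) \<inter> {l..l+K}"
      have "kk dvd int m - int l" using LL_cor(1)[OF lL] m by blast
      then have "int m - int l = 0 \<or> int m - int l = \<bar>kk\<bar>"
        by (rule dvd_small) (use m iK in auto)
      then show "m \<in> {l, l+K}" using iK by auto
    qed
  qed
  then have "K \<in> distances (S r) (of_nat A)"
    unfolding distances_def lengths_eq mem_Collect_eq using K0 lL by metis
  then have "K \<in> Delta (S r)" unfolding Delta_def using xS by (rule UN_I[rotated])
  moreover have "Delta (S r) \<subseteq> {K}" unfolding Delta_def using sub by auto
  ultimately show ?thesis unfolding K_def by auto
qed

end

theorem mainTheorem10:
  fixes r :: rat
  assumes "r > 0" and "r \<notin> \<nat>" and "num_of r > 1"
  shows "Delta (S r) = {nat \<bar>num_of r - den_of r\<bar>}"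
proof -
  obtain p q where pq: "quotient_of r = (p, q)" by (cases "quotient_of r") auto
  have np: "num_of r = p" "den_of r = q" using pq by (simp_all add: num_of_def den_of_def)
  have q0: "q > 0" by (rule quotient_of_denom_pos[OF pq])
  have cpq: "coprime p q" by (rule quotient_of_coprime[OF pq])
  have rpq: "r = of_int p / of_int q" by (rule quotient_of_div[OF pq])
  have p1: "p > 1" using assms(3) np by simp
  have q1: "q \<noteq> 1"
  proof
    assume "q = 1"
    then have "r = of_nat (nat p)" using rpq p1 by simp
    then show False using assms(2) by (simp add: Nats_def)
  qed
  define A where "A = nat p"
  define B where "B = nat q"
  have iA: "int A = p" "int B = q" using p1 q0 by (simp_all add: A_def B_def)
  interpret geo A B r
  proof
    show "2 \<le> A" using p1 by (simp add: A_def)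
    show "2 \<le> B" using q0 q1 by (simp add: B_def)
    show "coprime A B" using cpq iA by (metis coprime_int_iff)
    show "r = of_nat A / of_nat B" using rpq iA by (metis of_int_of_nat_eq)
  qed
  have "Delta (S r) = {nat \<bar>kk\<bar>}" by (rule Delta_eq)
  moreover have "\<bar>kk\<bar> = \<bar>num_of r - den_of r\<bar>" using iA np by (simp add: kk_def abs_minus_commute)
  ultimately show ?thesis by simp
qed

end
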